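(* Let $p$ be a prime. If $p\equiv -1\pmod 6$ and $p-4$ is prime, then $\frac{p+1}{3}-1$ is a twin-4 rank. If $p\equiv 1\pmod 6$ and $p+4$ is prime, then $\frac{p-1}{3}+1$ is a twin-4 rank.
   Context: An odd integer $t\geq 3$ is called a twin-4 rank if $3t-2$ and $3t+2$ are both prime; an odd integer $t\geq 3$ that is not a twin-4 rank is called a non-rank. *)

theory Defs
  imports "HOL-Computational_Algebra.Primes"
begin

definition twin4_rank :: "int \<Rightarrow> bool" where
  "twin4_rank t \<longleftrightarrow> odd t \<and> t \<ge> 3 \<and> prime (3 * t - 2) \<and> prime (3 * t + 2)"

end

theory Submission
  imports Defs
begin

theorem corollary2p3:
  fixes p :: int
  assumes "prime p"
  shows "(p mod 6 = 5 \<and> prime (p - 4) \<longrightarrow> twin4_rank ((p + 1) div 3 - 1))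
       \<and> (p mod 6 = 1 \<and> prime (p + 4) \<longrightarrow> twin4_rank ((p - 1) div 3 + 1))"
proof (intro conjI impI)
  have p2: "p \<ge> 2" using assms prime_ge_2_int by blast
  assume h: "p mod 6 = 5 \<and> prime (p - 4)"
  obtain k where k: "p = 6*k+5" using h by (metis mult.commute div_mult_mod_eq add.commute)
  have t: "(p + 1) div 3 - 1 = 2*k+1" using k by simp
  have "p - 4 \<noteq> 1" using h by auto
  hence "k \<ge> 1" using k p2 by auto
  moreover have "3*(2*k+1) - 2 = p - 4" "3*(2*k+1)+2 = p" using k by auto
  ultimately show "twin4_rank ((p + 1) div 3 - 1)" unfolding twin4_rank_def t
    using h assms by auto
next
  have p2: "p \<ge> 2" using assms prime_ge_2_int by blast
  assume h: "p mod 6 = 1 \<and> prime (p + 4)"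
  obtain k where k: "p = 6*k+1" using h by (metis mult.commute div_mult_mod_eq add.commute)
  have t: "(p - 1) div 3 + 1 = 2*k+1" using k by simp
  have "k \<ge> 1" using k p2 by auto
  moreover have "3*(2*k+1) - 2 = p" "3*(2*k+1)+2 = p + 4" using k by auto
  ultimately show "twin4_rank ((p - 1) div 3 + 1)" unfolding twin4_rank_def t
    using h assms by auto
qed

end
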